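(* Let $r_1,r_2,r_3$ be fixed integers and $i,j,k$ fixed non-negative integers. For $n\ge0$ set $$\sigma^{(n)}_{ijk}=\sum_{v+w=i+j+k+n+r_3}(-1)^{v-i}\binom{n+r_1-i}{v-i}\binom{r_2-j}{w-j}.$$ Then there exist polynomials $p_1,p_2$ such that $\sigma^{(n)}_{ijk}=(-1)^n\big(p_1(n)+2^np_2(n)\big)$ for all sufficiently large $n$.
   Context: Binomial coefficients $\binom{x}{m}$ are the generalized ones $x(x-1)\cdots(x-m+1)/m!$ for integers $m\ge0$, and are $0$ for $m<0$; the sum runs over integers $v,w$ (only finitely many terms are nonzero for $n$ large). *)

theory Defs
  imports Complex_Main "HOL-Computational_Algebra.Polynomial"
begin

definition gbinom :: "int \<Rightarrow> int \<Rightarrow> real" where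
  "gbinom x m = (if m < 0 then 0 else (real_of_int x) gchoose (nat m))"

definition sigma_term :: "int \<Rightarrow> int \<Rightarrow> nat \<Rightarrow> nat \<Rightarrow> nat \<Rightarrow> int \<times> int \<Rightarrow> real" where
  "sigma_term r1 r2 i j n = (\<lambda>(v, w).
     (-1) powi (v - int i) * gbinom (int n + r1 - int i) (v - int i)
       * gbinom (r2 - int j) (w - int j))"

text \<open>sigma^(n)_{ijk}: sum over all integer pairs (v,w) with v + w = i+j+k+n+r3;
  only the (finitely many, for n large) nonzero terms are summed.\<close>
definition sigma :: "int \<Rightarrow> int \<Rightarrow> int \<Rightarrow> nat \<Rightarrow> nat \<Rightarrow> nat \<Rightarrow> nat \<Rightarrow> real" where
  "sigma r1 r2 r3 i j k n =
     (\<Sum>p \<in> {(v, w). v + w = int i + int j + int k + int n + r3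
                     \<and> sigma_term r1 r2 i j n (v, w) \<noteq> 0}.
        sigma_term r1 r2 i j n p)"

end

theory Submission
  imports Defs
begin

definition SA :: "(real \<Rightarrow> real) \<Rightarrow> bool" where
  "SA f \<longleftrightarrow> (\<exists>a. \<forall>x. poly a (x+1) - 2 * poly a x = f x)"
definition SB :: "(real \<Rightarrow> real) \<Rightarrow> bool" where
  "SB f \<longleftrightarrow> (\<exists>a. \<forall>x. poly a (x+1) - poly a x = f x)"

lemma SA_add: "SA f \<Longrightarrow> SA g \<Longrightarrow> SA (\<lambda>x. f x + g x)"
  unfolding SA_def
proof (elim exE)
  fix a b assume "\<forall>x. poly a (x + 1) - 2 * poly a x = f x" "\<forall>x. poly b (x + 1) - 2 * poly b x = g x"
  then show "\<exists>c. \<forall>x. poly c (x + 1) - 2 * poly c x = f x + g x"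
    by (intro exI[of _ "a+b"]) (auto simp: algebra_simps)
qed

lemma SA_scale: "SA f \<Longrightarrow> SA (\<lambda>x. c * f x)"
  unfolding SA_def
proof (elim exE)
  fix a assume "\<forall>x. poly a (x + 1) - 2 * poly a x = f x"
  then show "\<exists>b. \<forall>x. poly b (x + 1) - 2 * poly b x = c * f x"
    by (intro exI[of _ "smult c a"]) (auto simp: algebra_simps)
qed

lemma SA_sum: "finite A \<Longrightarrow> (\<And>i. i \<in> A \<Longrightarrow> SA (f i)) \<Longrightarrow> SA (\<lambda>x. \<Sum>i\<in>A. f i x)"
proof (induction A rule: finite_induct)
  case empty
  then show ?case unfolding SA_def by (intro exI[of _ 0]) auto
next
  case (insert a A)
  then show ?case using SA_add[of "f a" "\<lambda>x. \<Sum>i\<in>A. f i x"] by simp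
qed

lemma SB_add: "SB f \<Longrightarrow> SB g \<Longrightarrow> SB (\<lambda>x. f x + g x)"
  unfolding SB_def
proof (elim exE)
  fix a b assume "\<forall>x. poly a (x + 1) - poly a x = f x" "\<forall>x. poly b (x + 1) - poly b x = g x"
  then show "\<exists>c. \<forall>x. poly c (x + 1) - poly c x = f x + g x"
    by (intro exI[of _ "a+b"]) (auto simp: algebra_simps)
qed

lemma SB_scale: "SB f \<Longrightarrow> SB (\<lambda>x. c * f x)"
  unfolding SB_def
proof (elim exE)
  fix a assume "\<forall>x. poly a (x + 1) - poly a x = f x"
  then show "\<exists>b. \<forall>x. poly b (x + 1) - poly b x = c * f x"
    by (intro exI[of _ "smult c a"]) (auto simp: algebra_simps)
qed

lemma SB_sum: "finite A \<Longrightarrow> (\<And>i. i \<in> A \<Longrightarrow> SB (f i)) \<Longrightarrow> SB (\<lambda>x. \<Sum>i\<in>A. f i x)"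
proof (induction A rule: finite_induct)
  case empty
  then show ?case unfolding SB_def by (intro exI[of _ 0]) auto
next
  case (insert a A)
  then show ?case using SB_add[of "f a" "\<lambda>x. \<Sum>i\<in>A. f i x"] by simp
qed

lemma binom_expand: "((x::real)+1)^j = x^j + (\<Sum>i<j. real (j choose i) * x^i)"
proof -
  have "(x+1)^j = (\<Sum>k\<le>j. real (j choose k) * x^k * 1^(j-k))" by (rule binomial_ring)
  also have "\<dots> = (\<Sum>k<Suc j. real (j choose k) * x^k)" by (simp add: lessThan_Suc_atMost)
  also have "\<dots> = x^j + (\<Sum>i<j. real (j choose i) * x^i)" by simp
  finally show ?thesis .
qed

lemma SA_pow: "SA (\<lambda>x. x^j)"
proof (induction j rule: less_induct)
  case (less j)
  have h1: "SA (\<lambda>x. 2 * x^j - (x+1)^j)"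
    unfolding SA_def by (intro exI[of _ "monom (-1) j"]) (auto simp: poly_monom)
  have h2: "SA (\<lambda>x. \<Sum>i<j. real (j choose i) * x^i)"
    by (intro SA_sum SA_scale less) auto
  have "SA (\<lambda>x. (2 * x^j - (x+1)^j) + (\<Sum>i<j. real (j choose i) * x^i))"
    by (rule SA_add[OF h1 h2])
  then show ?case by (simp add: binom_expand)
qed

lemma SB_pow: "SB (\<lambda>x. x^j)"
proof (induction j rule: less_induct)
  case (less j)
  have h1: "SB (\<lambda>x. ((x+1)^Suc j - x^Suc j) / real (Suc j))"
    unfolding SB_def by (intro exI[of _ "monom (1 / real (Suc j)) (Suc j)"]) (auto simp: poly_monom diff_divide_distrib)
  have h2: "SB (\<lambda>x. (-1 / real (Suc j)) * (\<Sum>i<j. real (Suc j choose i) * x^i))"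
    by (intro SB_scale SB_sum less) auto
  have "SB (\<lambda>x. ((x+1)^Suc j - x^Suc j) / real (Suc j) + (-1 / real (Suc j)) * (\<Sum>i<j. real (Suc j choose i) * x^i))"
    by (rule SB_add[OF h1 h2])
  moreover have "((x+1)^Suc j - x^Suc j) / real (Suc j) + (-1 / real (Suc j)) * (\<Sum>i<j. real (Suc j choose i) * x^i) = x^j" for x :: real
  proof -
    have "(x+1)^Suc j = x^Suc j + (\<Sum>i<Suc j. real (Suc j choose i) * x^i)" by (rule binom_expand)
    also have "(\<Sum>i<Suc j. real (Suc j choose i) * x^i) = real (Suc j) * x^j + (\<Sum>i<j. real (Suc j choose i) * x^i)"
      by simp
    finally have "(x+1)^Suc j - x^Suc j - (\<Sum>i<j. real (Suc j choose i) * x^i) = real (Suc j) * x^j"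
      by simp
    then have "((x+1)^Suc j - x^Suc j - (\<Sum>i<j. real (Suc j choose i) * x^i)) / real (Suc j) = x^j"
      by simp
    then show ?thesis by (simp add: diff_divide_distrib)
  qed
  ultimately show ?case by simp
qed

lemma SA_poly: "SA (poly p)"
proof -
  have "SA (\<lambda>x. \<Sum>i\<le>degree p. coeff p i * x ^ i)"
    by (intro SA_sum SA_scale SA_pow) auto
  then show ?thesis by (simp add: poly_altdef[abs_def])
qed

lemma SB_poly: "SB (poly p)"
proof -
  have "SB (\<lambda>x. \<Sum>i\<le>degree p. coeff p i * x ^ i)"
    by (intro SB_sum SB_scale SB_pow) auto
  then show ?thesis by (simp add: poly_altdef[abs_def])
qed

definition W :: "(nat \<Rightarrow> real) \<Rightarrow> bool" where
  "W f \<longleftrightarrow> (\<exists>p1 p2 N. \<forall>n\<ge>N. f n = poly p1 (real n) + 2^n * poly p2 (real n))"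

lemma W_add: "W f \<Longrightarrow> W g \<Longrightarrow> W (\<lambda>n. f n + g n)"
  unfolding W_def
proof (elim exE)
  fix p1 p2 N q1 q2 M
  assume f: "\<forall>n\<ge>N. f n = poly p1 (real n) + 2 ^ n * poly p2 (real n)"
    and g: "\<forall>n\<ge>M. g n = poly q1 (real n) + 2 ^ n * poly q2 (real n)"
  show "\<exists>p1 p2 N. \<forall>n\<ge>N. f n + g n = poly p1 (real n) + 2 ^ n * poly p2 (real n)"
    using f g by (intro exI[of _ "p1+q1"] exI[of _ "p2+q2"] exI[of _ "max N M"]) (auto simp: algebra_simps)
qed

lemma W_scale: "W f \<Longrightarrow> W (\<lambda>n. c * f n)"
  unfolding W_def
proof (elim exE)
  fix p1 p2 N
  assume f: "\<forall>n\<ge>N. f n = poly p1 (real n) + 2 ^ n * poly p2 (real n)"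
  show "\<exists>p1 p2 N. \<forall>n\<ge>N. c * f n = poly p1 (real n) + 2 ^ n * poly p2 (real n)"
    using f by (intro exI[of _ "smult c p1"] exI[of _ "smult c p2"] exI[of _ N]) (auto simp: algebra_simps)
qed

lemma W_zero: "W (\<lambda>n. 0)"
  unfolding W_def by (intro exI[of _ 0] exI[of _ 0] exI[of _ 0]) auto

lemma gchoose_poly: "\<exists>p. \<forall>x::real. poly p x = x gchoose k"
proof -
  have "poly (smult (1 / fact k) (\<Prod>i<k. [:- of_nat i, 1:])) x = x gchoose k" for x :: real
    by (simp add: poly_prod gbinomial_prod_rev atLeast0LessThan)
  then show ?thesis by blast
qed

lemma W_binom: "W (\<lambda>n. real (n choose k))"
proof -
  obtain p where p: "\<forall>x::real. poly p x = x gchoose k" using gchoose_poly by blast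
  show ?thesis unfolding W_def
    by (intro exI[of _ p] exI[of _ 0] exI[of _ 0]) (simp add: p binomial_gbinomial)
qed

lemma W_rec:
  assumes "W f" and rec: "\<And>m. h (Suc m) = 2 * h m - f m"
  shows "W h"
proof -
  obtain p1 p2 N where f: "\<And>n. n \<ge> N \<Longrightarrow> f n = poly p1 (real n) + 2^n * poly p2 (real n)"
    using assms(1) unfolding W_def by blast
  obtain a where a: "\<And>x. poly a (x+1) - 2 * poly a x = - poly p1 x"
    using SA_scale[OF SA_poly[of p1], of "-1"] unfolding SA_def by auto
  obtain b where b: "\<And>x. poly b (x+1) - poly b x = (-1/2) * poly p2 x"
    using SB_scale[OF SB_poly[of p2], of "-1/2"] unfolding SB_def by auto
  define k where "k n = h n - poly a (real n) - 2^n * poly b (real n)" for n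
  have ks: "k (Suc n) = 2 * k n" if "n \<ge> N" for n
  proof -
    have "k (Suc n) = h (Suc n) - poly a (real n + 1) - 2^Suc n * poly b (real n + 1)"
      unfolding k_def by (simp add: add.commute)
    also have "\<dots> = 2 * h n - (poly p1 (real n) + 2^n * poly p2 (real n))
        - (2 * poly a (real n) - poly p1 (real n)) - 2 * 2^n * (poly b (real n) + (-1/2) * poly p2 (real n))"
    proof -
      have a': "poly a (real n + 1) = 2 * poly a (real n) - poly p1 (real n)" using a[of "real n"] by simp
      have b': "poly b (real n + 1) = poly b (real n) + (-1/2) * poly p2 (real n)" using b[of "real n"] by simp
      show ?thesis unfolding a' b' rec[of n] f[OF that] by simp
    qed
    also have "\<dots> = 2 * k n" unfolding k_def by (simp add: algebra_simps)
    finally show ?thesis .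
  qed
  have kN: "k n = 2^(n - N) * k N" if "n \<ge> N" for n
    using that
  proof (induction n rule: dec_induct)
    case base then show ?case by simp
  next
    case (step n)
    then show ?case using ks[OF step(1)] by (simp add: Suc_diff_le)
  qed
  have "h n = poly a (real n) + 2^n * poly (b + [: k N / 2^N :]) (real n)" if "n \<ge> N" for n
  proof -
    have "(2::real)^n = 2^(n-N) * 2^N" using that by (simp add: power_add[symmetric])
    then have "2^n * (k N / 2^N) = 2^(n-N) * (k N :: real)" by simp
    then show ?thesis using kN[OF that] unfolding k_def by (simp add: algebra_simps)
  qed
  then show ?thesis unfolding W_def by blast
qed

lemma gbinom_pascal: "gbinom c b = gbinom (c-1) b + gbinom (c-1) (b-1)"
proof (cases "b < 0")
  case True then show ?thesis by (simp add: gbinom_def)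
next
  case False
  show ?thesis
  proof (cases "b = 0")
    case True then show ?thesis by (simp add: gbinom_def)
  next
    case False
    with \<open>\<not> b < 0\<close> have b: "b \<ge> 1" by simp
    define k where "k = nat (b-1)"
    have k: "nat b = Suc k" "nat (b-1) = k" using b unfolding k_def by simp_all
    show ?thesis using \<open>\<not> b < 0\<close> False
      unfolding gbinom_def k
      using gbinomial_addition_formula[of "real_of_int c" k] by simp
  qed
qed

definition G :: "int \<Rightarrow> int \<Rightarrow> nat \<Rightarrow> real" where
  "G c d m = (\<Sum>a\<le>m. (-1)^a * real (m choose a) * gbinom c (int m + d - int a))"

lemma G_pascal: "G c d m = G (c-1) d m + G (c-1) (d-1) m"
  unfolding G_def sum.distrib[symmetric]
proof (rule sum.cong)
  fix a assume "a \<in> {..m}"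
  have "gbinom c (int m + d - int a) = gbinom (c-1) (int m + d - int a) + gbinom (c-1) (int m + (d-1) - int a)"
    using gbinom_pascal[of c "int m + d - int a"] by (simp add: algebra_simps)
  then show "(-1)^a * real (m choose a) * gbinom c (int m + d - int a) =
    (-1)^a * real (m choose a) * gbinom (c-1) (int m + d - int a) + (-1)^a * real (m choose a) * gbinom (c-1) (int m + (d-1) - int a)"
    by (simp add: algebra_simps)
qed simp

lemma G_step: "G c d (Suc m) = G c (d+1) m - G c d m"
proof -
  define g where "g b = gbinom c b" for b
  have L: "G c d (Suc m) = g (int m + 1 + d) + (\<Sum>a\<le>m. (-1)^(Suc a) * real (Suc m choose Suc a) * g (int m + d - int a))"
    unfolding G_def g_def by (subst sum.atMost_Suc_shift) (simp add: algebra_simps)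
  have E: "G c (d+1) m = (\<Sum>a\<le>Suc m. (-1)^a * real (m choose a) * g (int m + (d+1) - int a))"
    unfolding G_def g_def by simp
  also have "\<dots> = g (int m + 1 + d) + (\<Sum>a\<le>m. (-1)^(Suc a) * real (m choose Suc a) * g (int m + d - int a))"
    by (subst sum.atMost_Suc_shift) (simp add: algebra_simps)
  finally have R1: "G c (d+1) m = g (int m + 1 + d) + (\<Sum>a\<le>m. (-1)^(Suc a) * real (m choose Suc a) * g (int m + d - int a))" .
  have R2: "G c d m = (\<Sum>a\<le>m. (-1)^a * real (m choose a) * g (int m + d - int a))"
    unfolding G_def g_def by simp
  have "(\<Sum>a\<le>m. (-1)^(Suc a) * real (Suc m choose Suc a) * g (int m + d - int a))
     = (\<Sum>a\<le>m. (-1)^(Suc a) * real (m choose Suc a) * g (int m + d - int a)) - (\<Sum>a\<le>m. (-1)^a * real (m choose a) * g (int m + d - int a))"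
    unfolding sum_subtractf[symmetric] by (rule sum.cong) (simp_all add: algebra_simps)
  then show ?thesis using L R1 R2 by simp
qed

definition H :: "int \<Rightarrow> int \<Rightarrow> nat \<Rightarrow> real" where
  "H c d m = (-1)^m * G c d m"

lemma H_pascal: "H c d m = H (c-1) d m + H (c-1) (d-1) m"
  unfolding H_def using G_pascal[of c d m] by (simp add: algebra_simps)

lemma H_rec: "H c d (Suc m) = 2 * H c d m - H (c+1) (d+1) m"
proof -
  have e: "G (c+1) (d+1) m = G c (d+1) m + G c d m" using G_pascal[of "c+1" "d+1" m] by simp
  show ?thesis by (simp only: H_def G_step e power_Suc) (simp add: algebra_simps)
qed

lemma gbinom_0: "gbinom 0 b = (if b = 0 then 1 else 0)"
  by (simp add: gbinom_def gbinomial_0_left)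

lemma H0: "H 0 d m = (if d \<le> 0 then (-1)^nat(-d) * real (m choose nat(-d)) else 0)"
proof -
  have G0: "G 0 d m = (\<Sum>a\<le>m. if int m + d - int a = 0 then (-1)^a * real (m choose a) else 0)"
    unfolding G_def gbinom_0 by (rule sum.cong) auto
  show ?thesis
  proof (cases "d \<le> 0 \<and> nat (-d) \<le> m")
    case True
    define e where "e = nat (-d)"
    have em: "e \<le> m" and de: "d = - int e" using True unfolding e_def by auto
    have "G 0 d m = (\<Sum>a\<le>m. if a = m - e then (-1)^a * real (m choose a) else 0)"
      unfolding G0 by (rule sum.cong) (use em de in auto)
    also have "\<dots> = (-1)^(m-e) * real (m choose (m-e))" by simp
    also have "\<dots> = (-1)^(m-e) * real (m choose e)" using binomial_symmetric[OF em] by simp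
    finally have g: "G 0 d m = (-1)^(m-e) * real (m choose e)" .
    have mm: "m = (m - e) + e" using em by simp
    have "(-1::real)^m * (-1)^(m-e) = ((-1) * (-1))^(m-e) * (-1)^e"
      by (subst mm) (simp only: power_add power_mult_distrib mult_ac)
    also have "\<dots> = (-1)^e" by simp
    finally have "(-1::real)^m * (-1)^(m-e) = (-1)^e" .
    then show ?thesis unfolding H_def g using True e_def by (simp add: mult.assoc[symmetric])
  next
    case False
    have "G 0 d m = 0" unfolding G0 by (rule sum.neutral) (use False in auto)
    then show ?thesis unfolding H_def using False by auto
  qed
qed

lemma W_H0: "W (H 0 d)"
proof (cases "d \<le> 0")
  case True
  then show ?thesis unfolding H0 using W_scale[OF W_binom] by simp
next
  case False
  then show ?thesis unfolding H0 using W_zero by simp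
qed

lemma W_H_nonneg: "W (H (int c) d)"
proof (induction c arbitrary: d)
  case 0 then show ?case using W_H0 by simp
next
  case (Suc c)
  have "H (int (Suc c)) d = (\<lambda>m. H (int c) d m + H (int c) (d-1) m)"
    using H_pascal[of "int (Suc c)" d] by auto
  then show ?case using W_add[OF Suc Suc] by simp
qed

lemma W_H_neg: "W (H (- int c) d)"
proof (induction c arbitrary: d)
  case 0 then show ?case using W_H_nonneg[of 0] by simp
next
  case (Suc c)
  have "W (\<lambda>m. H (- int c) (d+1) m)" using Suc by simp
  moreover have "H (- int (Suc c)) d (Suc m) = 2 * H (- int (Suc c)) d m - H (- int c) (d+1) m" for m
    using H_rec[of "- int (Suc c)" d m] by simp
  ultimately show ?case by (rule W_rec)
qed

lemma W_H: "W (H c d)"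
  using W_H_nonneg[of "nat c" d] W_H_neg[of "nat (-c)" d] by (cases "c \<ge> 0") auto

lemma gbinom_nat: "gbinom (int m) (int a) = real (m choose a)"
  by (simp add: gbinom_def binomial_gbinomial)

lemma gbinom_nat_nz: "gbinom (int m) b \<noteq> 0 \<Longrightarrow> 0 \<le> b \<and> nat b \<le> m"
  by (cases "b < 0") (auto simp: gbinom_def binomial_gbinomial[symmetric])

lemma sigma_G:
  fixes r1 r2 r3 :: int and i j k n :: nat
  assumes "int n + r1 - int i \<ge> 0"
  defines "m \<equiv> nat (int n + r1 - int i)"
  defines "S \<equiv> {(v, w). v + w = int i + int j + int k + int n + r3
                     \<and> sigma_term r1 r2 i j n (v, w) \<noteq> 0}"
  shows "finite S \<and> sigma r1 r2 r3 i j k n = G (r2 - int j) (int k + r3 - r1 + int i) m"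
proof -
  define T where "T = int i + int j + int k + int n + r3"
  define f where "f a = (int a + int i, T - int a - int i)" for a :: nat
  have mi: "int m = int n + r1 - int i" using assms(1) unfolding m_def by simp
  have sub: "S \<subseteq> f ` {..m}"
  proof
    fix p assume "p \<in> S"
    then obtain v w where p: "p = (v, w)" "v + w = T" "sigma_term r1 r2 i j n (v, w) \<noteq> 0"
      unfolding S_def T_def by auto
    then have "gbinom (int m) (v - int i) \<noteq> 0"
      unfolding sigma_term_def mi by auto
    from gbinom_nat_nz[OF this] have "0 \<le> v - int i" "nat (v - int i) \<le> m" by auto
    then show "p \<in> f ` {..m}" unfolding f_def using p
      by (intro image_eqI[of _ _ "nat (v - int i)"]) auto
  qed
  have fin: "finite S" using sub finite_subset by blast
  have inj: "inj_on f {..m}" unfolding f_def inj_on_def by auto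
  have "sigma r1 r2 r3 i j k n = (\<Sum>p\<in>S. sigma_term r1 r2 i j n p)"
    unfolding sigma_def S_def by simp
  also have "\<dots> = (\<Sum>p\<in>f ` {..m}. sigma_term r1 r2 i j n p)"
  proof (rule sum.mono_neutral_left[OF _ sub])
    show "\<forall>p\<in>f ` {..m} - S. sigma_term r1 r2 i j n p = 0"
      unfolding S_def f_def T_def by auto
  qed simp
  also have "\<dots> = (\<Sum>a\<le>m. sigma_term r1 r2 i j n (f a))"
    by (rule sum.reindex[OF inj, unfolded comp_def])
  also have "\<dots> = G (r2 - int j) (int k + r3 - r1 + int i) m"
    unfolding G_def
  proof (rule sum.cong)
    fix a assume "a \<in> {..m}"
    have e1: "int n + r1 - int i = int m" using mi by simp
    have e2: "T - int a - int i - int j = int m + (int k + r3 - r1 + int i) - int a"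
      unfolding T_def mi by simp
    show "sigma_term r1 r2 i j n (f a) = (-1)^a * real (m choose a) * gbinom (r2 - int j) (int m + (int k + r3 - r1 + int i) - int a)"
      unfolding sigma_term_def f_def e1 prod.case e2 by (simp add: gbinom_nat)
  qed simp
  finally show ?thesis using fin by simp
qed

theorem lemma11:
  fixes r1 r2 r3 :: int and i j k :: nat
  shows "\<exists>p1 p2 :: real poly. \<exists>N. \<forall>n\<ge>N.
           finite {(v, w). v + w = int i + int j + int k + int n + r3
                     \<and> sigma_term r1 r2 i j n (v, w) \<noteq> 0} \<and>
           sigma r1 r2 r3 i j k n = (-1) ^ n * (poly p1 (real n) + 2 ^ n * poly p2 (real n))"
proof -
  define c where "c = r2 - int j"
  define d where "d = int k + r3 - r1 + int i"
  define e where "e = r1 - int i"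
  obtain P Q N where PQ: "\<And>m. m \<ge> N \<Longrightarrow> H c d m = poly P (real m) + 2^m * poly Q (real m)"
    using W_H[of c d] unfolding W_def by blast
  define p1 where "p1 = smult ((-1) powi e) (pcompose P [:of_int e, 1:])"
  define p2 where "p2 = smult ((-1) powi e * 2 powi e) (pcompose Q [:of_int e, 1:])"
  define N' where "N' = nat (int N - e) + nat (- e)"
  have "finite {(v, w). v + w = int i + int j + int k + int n + r3
                     \<and> sigma_term r1 r2 i j n (v, w) \<noteq> 0} \<and>
           sigma r1 r2 r3 i j k n = (-1) ^ n * (poly p1 (real n) + 2 ^ n * poly p2 (real n))"
    if n: "n \<ge> N'" for n
  proof -
    have ne: "int n + r1 - int i \<ge> 0" using n unfolding N'_def e_def by simp
    define m where "m = nat (int n + r1 - int i)"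
    have mi: "int m = int n + e" using ne unfolding m_def e_def by simp
    have mN: "m \<ge> N" using n mi unfolding N'_def by simp
    from sigma_G[OF ne] have fin: "finite {(v, w). v + w = int i + int j + int k + int n + r3
                     \<and> sigma_term r1 r2 i j n (v, w) \<noteq> 0}"
      and sg: "sigma r1 r2 r3 i j k n = G c d m" unfolding m_def c_def d_def by auto
    have GH: "G c d m = (-1)^m * H c d m" unfolding H_def by simp
    have rm: "real m = of_int e + real n" using mi by (metis add.commute of_int_add of_int_of_nat_eq)
    have pm: "(-1::real)^m = (-1)^n * (-1) powi e"
    proof -
      have "(-1::real)^m = (-1) powi (int m)" by (simp add: power_int_of_nat)
      also have "\<dots> = (-1) powi (int n) * (-1) powi e" unfolding mi by (rule power_int_add) simp
      finally show ?thesis by (simp add: power_int_of_nat)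
    qed
    have tm: "(2::real)^m = 2^n * 2 powi e"
    proof -
      have "(2::real)^m = 2 powi (int m)" by (simp add: power_int_of_nat)
      also have "\<dots> = 2 powi (int n) * 2 powi e" unfolding mi by (rule power_int_add) simp
      finally show ?thesis by (simp add: power_int_of_nat)
    qed
    have "sigma r1 r2 r3 i j k n = (-1)^m * (poly P (real m) + 2^m * poly Q (real m))"
      using sg GH PQ[OF mN] by simp
    also have "\<dots> = (-1) ^ n * (poly p1 (real n) + 2 ^ n * poly p2 (real n))"
      unfolding pm tm p1_def p2_def rm by (simp add: poly_pcompose algebra_simps)
    finally show ?thesis using fin by simp
  qed
  then show ?thesis by blast
qed

end
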